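(* Let $G$ be a non-separable graph with subgraphs $G_1,G_2$ such that $V(G_1)\cap V(G_2)=\{u,v\}$ (two distinct vertices), $V(G_1)\cup V(G_2)=V(G)$, $E(G_1)\cap E(G_2)=\emptyset$ and $E(G_1)\cup E(G_2)=E(G)$. Then $$F(G,\lambda)=\frac{F(G_1+uv,\lambda)\,F(G_2+uv,\lambda)}{\lambda-1}+F(G_1,\lambda)F(G_2,\lambda).$$
   Context: Graphs are finite, undirected, possibly with loops and parallel edges. The flow polynomial $F(G,\lambda)$ is determined by: $F(G,\lambda)=1$ if $E(G)=\emptyset$; $F(G,\lambda)=0$ if $G$ has a bridge; multiplicative over disjoint unions; $F(G,\lambda)=(\lambda-1)F(G-e,\lambda)$ if $e$ is a loop; otherwise $F(G,\lambda)=F(G/e,\lambda)-F(G-e,\lambda)$ ($G/e$ = contraction of $e$). A graph is non-separable if it is connected, has no cut-vertex, and either has no loops or has exactly one vertex and one edge. $H+uv$ denotes the graph obtained from $H$ by adding a new edge joining $u$ and $v$. *)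

theory Defs
  imports "HOL-Library.Uprod" "HOL-Computational_Algebra.Polynomial"
begin

text \<open>Finite multigraphs with loops and parallel edges: a vertex set, an edge set and an
  endpoint map (an unordered pair; a loop has ends Upair x x). Only the values of ends on
  edges are meaningful.\<close>

record ('v, 'e) mgraph =
  verts :: "'v set"
  edges :: "'e set"
  ends  :: "'e \<Rightarrow> 'v uprod"

definition wf_graph :: "('v, 'e) mgraph \<Rightarrow> bool" where
  "wf_graph G \<longleftrightarrow> finite (verts G) \<and> finite (edges G) \<and>
     (\<forall>e\<in>edges G. set_uprod (ends G e) \<subseteq> verts G)"

definition is_loop :: "('v, 'e) mgraph \<Rightarrow> 'e \<Rightarrow> bool" where
  "is_loop G e \<longleftrightarrow> e \<in> edges G \<and> (\<exists>x. ends G e = Upair x x)"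

inductive reach :: "('v, 'e) mgraph \<Rightarrow> 'v \<Rightarrow> 'v \<Rightarrow> bool" for G where
  refl: "x \<in> verts G \<Longrightarrow> reach G x x"
| step: "reach G x y \<Longrightarrow> e \<in> edges G \<Longrightarrow> ends G e = Upair y z \<Longrightarrow> reach G x z"

definition del_edge :: "('v, 'e) mgraph \<Rightarrow> 'e \<Rightarrow> ('v, 'e) mgraph" where
  "del_edge G e = G\<lparr>edges := edges G - {e}\<rparr>"

definition del_vert :: "('v, 'e) mgraph \<Rightarrow> 'v \<Rightarrow> ('v, 'e) mgraph" where
  "del_vert G v = G\<lparr>verts := verts G - {v},
                    edges := {e \<in> edges G. v \<notin> set_uprod (ends G e)}\<rparr>"

definition add_edge :: "('v, 'e) mgraph \<Rightarrow> 'e \<Rightarrow> 'v \<Rightarrow> 'v \<Rightarrow> ('v, 'e) mgraph" where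
  "add_edge G e u v = G\<lparr>edges := insert e (edges G), ends := (ends G)(e := Upair u v)\<rparr>"

definition connected :: "('v, 'e) mgraph \<Rightarrow> bool" where
  "connected G \<longleftrightarrow> verts G \<noteq> {} \<and> (\<forall>x\<in>verts G. \<forall>y\<in>verts G. reach G x y)"

text \<open>A bridge: an edge whose deletion increases the number of components, i.e. its two
  ends are no longer joined by a path in \<open>G - e\<close>.\<close>
definition is_bridge :: "('v, 'e) mgraph \<Rightarrow> 'e \<Rightarrow> bool" where
  "is_bridge G e \<longleftrightarrow> e \<in> edges G \<and>
     (\<exists>x y. ends G e = Upair x y \<and> \<not> reach (del_edge G e) x y)"

definition has_bridge :: "('v, 'e) mgraph \<Rightarrow> bool" where
  "has_bridge G \<longleftrightarrow> (\<exists>e. is_bridge G e)"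

definition is_cut_vertex :: "('v, 'e) mgraph \<Rightarrow> 'v \<Rightarrow> bool" where
  "is_cut_vertex G v \<longleftrightarrow> v \<in> verts G \<and>
     (\<exists>x\<in>verts G - {v}. \<exists>y\<in>verts G - {v}. \<not> reach (del_vert G v) x y)"

definition non_separable :: "('v, 'e) mgraph \<Rightarrow> bool" where
  "non_separable G \<longleftrightarrow> connected G \<and> (\<forall>v. \<not> is_cut_vertex G v) \<and>
     ((\<forall>e. \<not> is_loop G e) \<or> (card (verts G) = 1 \<and> card (edges G) = 1))"

text \<open>\<open>H\<close> is (up to the irrelevant values of ends off the edge set) the contraction \<open>G/e\<close>
  of the non-loop edge \<open>e\<close> with ends \<open>u, v\<close>: \<open>v\<close> is merged into \<open>u\<close>.\<close>
definition is_contraction :: "('v, 'e) mgraph \<Rightarrow> 'e \<Rightarrow> ('v, 'e) mgraph \<Rightarrow> bool" where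
  "is_contraction G e H \<longleftrightarrow> e \<in> edges G \<and>
     (\<exists>u v. u \<noteq> v \<and> ends G e = Upair u v \<and> verts H = verts G - {v} \<and>
        edges H = edges G - {e} \<and>
        (\<forall>f\<in>edges H. ends H f = map_uprod (\<lambda>w. if w = v then u else w) (ends G f)))"

definition is_deletion :: "('v, 'e) mgraph \<Rightarrow> 'e \<Rightarrow> ('v, 'e) mgraph \<Rightarrow> bool" where
  "is_deletion G e H \<longleftrightarrow> e \<in> edges G \<and> verts H = verts G \<and> edges H = edges G - {e} \<and>
     (\<forall>f\<in>edges H. ends H f = ends G f)"

definition is_disjoint_union ::
  "('v, 'e) mgraph \<Rightarrow> ('v, 'e) mgraph \<Rightarrow> ('v, 'e) mgraph \<Rightarrow> bool" where
  "is_disjoint_union G G1 G2 \<longleftrightarrow> wf_graph G1 \<and> wf_graph G2 \<and>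
     verts G = verts G1 \<union> verts G2 \<and> verts G1 \<inter> verts G2 = {} \<and>
     edges G = edges G1 \<union> edges G2 \<and> edges G1 \<inter> edges G2 = {} \<and>
     (\<forall>f\<in>edges G1. ends G f = ends G1 f) \<and> (\<forall>f\<in>edges G2. ends G f = ends G2 f)"

inductive flow_rel :: "('v, 'e) mgraph \<Rightarrow> real poly \<Rightarrow> bool" where
  empty: "wf_graph G \<Longrightarrow> edges G = {} \<Longrightarrow> flow_rel G 1"
| bridge: "wf_graph G \<Longrightarrow> has_bridge G \<Longrightarrow> flow_rel G 0"
| union: "wf_graph G \<Longrightarrow> is_disjoint_union G G1 G2 \<Longrightarrow> flow_rel G1 p1 \<Longrightarrow>
            flow_rel G2 p2 \<Longrightarrow> flow_rel G (p1 * p2)"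
| loop: "wf_graph G \<Longrightarrow> is_loop G e \<Longrightarrow> is_deletion G e H \<Longrightarrow> flow_rel H p \<Longrightarrow>
            flow_rel G ([:-1, 1:] * p)"
| delcon: "wf_graph G \<Longrightarrow> \<not> has_bridge G \<Longrightarrow> e \<in> edges G \<Longrightarrow> \<not> is_loop G e \<Longrightarrow>
            is_contraction G e H1 \<Longrightarrow> is_deletion G e H2 \<Longrightarrow>
            flow_rel H1 p1 \<Longrightarrow> flow_rel H2 p2 \<Longrightarrow> flow_rel G (p1 - p2)"

definition flow_poly :: "('v, 'e) mgraph \<Rightarrow> real poly" where
  "flow_poly G = (THE p. flow_rel G p)"

definition is_subgraph :: "('v, 'e) mgraph \<Rightarrow> ('v, 'e) mgraph \<Rightarrow> bool" where
  "is_subgraph H G \<longleftrightarrow> wf_graph H \<and> verts H \<subseteq> verts G \<and> edges H \<subseteq> edges G \<and>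
     (\<forall>f\<in>edges H. ends H f = ends G f)"

end

theory Submission
  imports Defs
begin



definition gwf :: "('v, 'e) mgraph \<Rightarrow> bool" where
  "gwf G \<longleftrightarrow> (\<forall>e\<in>edges G. set_uprod (ends G e) \<subseteq> verts G)"

definition sg :: "('v, 'e) mgraph \<Rightarrow> 'e set \<Rightarrow> ('v, 'e) mgraph" where
  "sg G A = G\<lparr>edges := A\<rparr>"

lemma sg_simps[simp]: "verts (sg G A) = verts G" "edges (sg G A) = A" "ends (sg G A) = ends G"
  by (simp_all add: sg_def)

lemma gwf_sg: "gwf G \<Longrightarrow> A \<subseteq> edges G \<Longrightarrow> gwf (sg G A)"
  by (auto simp: gwf_def)

lemma reach_verts1: "reach G x y \<Longrightarrow> x \<in> verts G"
  by (induction rule: reach.induct) auto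

lemma reach_verts2: "reach G x y \<Longrightarrow> gwf G \<Longrightarrow> y \<in> verts G"
  by (induction rule: reach.induct) (auto simp: gwf_def)

lemma reach_trans: "reach G y z \<Longrightarrow> reach G x y \<Longrightarrow> reach G x z"
  by (induction rule: reach.induct) (auto intro: reach.step)

lemma reach_edge': "reach G x y \<Longrightarrow> e \<in> edges G \<Longrightarrow> ends G e = Upair z y \<Longrightarrow> reach G x z"
  by (metis Upair_inject reach.step)

lemma reach_sym: "reach G x y \<Longrightarrow> gwf G \<Longrightarrow> reach G y x"
proof (induction rule: reach.induct)
  case (refl x) then show ?case by (auto intro: reach.refl)
next
  case (step x y e z)
  have "z \<in> verts G" using step.prems step.hyps(2,3) unfolding gwf_def by fastforce
  then have "reach G z y" by (rule reach_edge'[OF reach.refl step.hyps(2) step.hyps(3)])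
  then show ?case using reach_trans[OF step.IH[OF step.prems]] by blast
qed

lemma reach_mono: "reach G x y \<Longrightarrow> verts G \<subseteq> verts H \<Longrightarrow>
   (\<forall>f\<in>edges G. f \<in> edges H \<and> ends H f = ends G f) \<Longrightarrow> reach H x y"
  by (induction rule: reach.induct) (auto intro: reach.intros)

lemma reach_sg_mono: "reach (sg G A) x y \<Longrightarrow> A \<subseteq> B \<Longrightarrow> reach (sg G B) x y"
  by (erule reach_mono) auto

lemma reach_restrict: "reach G x y \<Longrightarrow> x \<in> verts H \<Longrightarrow> gwf H \<Longrightarrow>
  (\<forall>f\<in>edges G. set_uprod (ends G f) \<inter> verts H \<noteq> {} \<longrightarrow> f \<in> edges H \<and> ends H f = ends G f)
   \<Longrightarrow> reach H x y"
proof (induction rule: reach.induct)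
  case (refl x) then show ?case by (simp add: reach.refl)
next
  case (step x y e z)
  have r: "reach H x y" using step.IH[OF step.prems] .
  have yv: "y \<in> verts H" using reach_verts2[OF r step.prems(2)] .
  have "set_uprod (ends G e) \<inter> verts H \<noteq> {}" using step.hyps(3) yv by auto
  then have "e \<in> edges H \<and> ends H e = ends G e" using step.prems(3) step.hyps(2) by blast
  then show ?case using reach.step[OF r, of e z] step.hyps(3) by simp
qed

lemma reach_insert:
  assumes "gwf (sg G A)" "ends G e = Upair a b" "a \<in> verts G" "b \<in> verts G"
  shows "reach (sg G (insert e A)) x y \<longleftrightarrow> reach (sg G A) x y \<or>
     (reach (sg G A) x a \<and> reach (sg G A) b y) \<or> (reach (sg G A) x b \<and> reach (sg G A) a y)"
    (is "?L \<longleftrightarrow> ?R")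
proof
  assume ?L then show ?R
  proof (induction rule: reach.induct)
    case (refl x) then show ?case by (auto intro: reach.refl)
  next
    case (step x y f z)
    show ?case
    proof (cases "f \<in> A")
      case True
      then show ?thesis using step.IH step.hyps(3)
        by (auto intro: reach.step)
    next
      case False
      then have f: "f = e" using step by auto
      have ra: "reach (sg G A) a a" "reach (sg G A) b b" using assms by (auto intro: reach.refl)
      have yz: "(y = a \<and> z = b) \<or> (y = b \<and> z = a)" using step.hyps(3) f assms(2) by auto
      show ?thesis using step.IH yz ra reach_trans reach_sym[OF _ assms(1)] by metis
    qed
  qed
next
  have s: "reach (sg G (insert e A)) a b" "reach (sg G (insert e A)) b a"
    using assms by (auto intro!: reach.step[OF reach.refl] reach_edge'[OF reach.refl])
  have m: "reach (sg G A) p q \<Longrightarrow> reach (sg G (insert e A)) p q" for p q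
    by (erule reach_sg_mono) auto
  assume ?R then show ?L
  proof (elim disjE conjE)
    assume "reach (sg G A) x y" then show ?L by (rule m)
  next
    assume "reach (sg G A) x a" "reach (sg G A) b y"
    then show ?L using reach_trans[OF m reach_trans[OF s(1) m]] by blast
  next
    assume "reach (sg G A) x b" "reach (sg G A) a y"
    then show ?L using reach_trans[OF m reach_trans[OF s(2) m]] by blast
  qed
qed

definition krel :: "('v, 'e) mgraph \<Rightarrow> 'e set \<Rightarrow> ('v \<times> 'v) set" where
  "krel G A = {(x, y). reach (sg G A) x y}"

definition kc :: "('v, 'e) mgraph \<Rightarrow> 'e set \<Rightarrow> nat" where
  "kc G A = card (verts G // krel G A)"

lemma quot_eq: "verts G // krel G A = (\<lambda>z. {w. reach (sg G A) z w}) ` verts G"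
  by (auto simp: quotient_def krel_def)

lemma kc_empty: "finite (verts G) \<Longrightarrow> kc G {} = card (verts G)"
proof -
  assume fin: "finite (verts G)"
  have r: "reach (sg G {}) z w \<longleftrightarrow> z = w \<and> z \<in> verts G" for z w
  proof
    assume "reach (sg G {}) z w" then show "z = w \<and> z \<in> verts G"
      by (induction rule: reach.induct) auto
  qed (auto intro: reach.refl)
  have "verts G // krel G {} = (\<lambda>z. {z}) ` verts G" unfolding quot_eq r by auto
  then show ?thesis unfolding kc_def using card_image[of "\<lambda>z. {z}" "verts G"] by auto
qed

lemma kc_insert:
  assumes g: "gwf G" and A: "A \<subseteq> edges G" and e: "e \<in> edges G" and ab: "ends G e = Upair a b"
    and fin: "finite (verts G)"
  shows "int (kc G (insert e A)) = int (kc G A) - (if reach (sg G A) a b then 0 else 1)"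
proof -
  have av: "a \<in> verts G" "b \<in> verts G" using g e ab by (auto simp: gwf_def)
  have gA: "gwf (sg G A)" using gwf_sg[OF g A] .
  define R where "R = reach (sg G A)"
  have symR: "R x y \<Longrightarrow> R y x" for x y unfolding R_def using reach_sym[OF _ gA] .
  have transR: "R x y \<Longrightarrow> R y z \<Longrightarrow> R x z" for x y z unfolding R_def using reach_trans by metis
  have vR: "R x y \<Longrightarrow> x \<in> verts G \<and> y \<in> verts G" for x y unfolding R_def
    using reach_verts1 reach_verts2[OF _ gA] by fastforce
  have ins: "reach (sg G (insert e A)) x y \<longleftrightarrow> R x y \<or> (R x a \<and> R b y) \<or> (R x b \<and> R a y)" for x y
    unfolding R_def using reach_insert[OF gA ab av] .
  show ?thesis
  proof (cases "R a b")
    case True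
    have "reach (sg G (insert e A)) x y \<longleftrightarrow> R x y" for x y
      unfolding ins using True symR transR by metis
    then have "krel G (insert e A) = krel G A" unfolding krel_def R_def by auto
    then show ?thesis using True unfolding kc_def R_def by simp
  next
    case False
    define c where "c z = {w. R z w}" for z
    define T where "T = c ` (verts G - (c a \<union> c b))"
    have cl: "{w. reach (sg G (insert e A)) z w} = (if z \<in> c a \<union> c b then c a \<union> c b else c z)"
      if z: "z \<in> verts G" for z
    proof (cases "z \<in> c a")
      case True
      then have "R a z" unfolding c_def by auto
      then have "reach (sg G (insert e A)) z w \<longleftrightarrow> R a w \<or> R b w" for w
        unfolding ins using False symR transR by metis
      then show ?thesis using True unfolding c_def by auto
    next
      case nA: False
      show ?thesis
      proof (cases "z \<in> c b")
        case True
        then have "R b z" unfolding c_def by auto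
        then have "reach (sg G (insert e A)) z w \<longleftrightarrow> R a w \<or> R b w" for w
          unfolding ins using False symR transR by metis
        then show ?thesis using True unfolding c_def by auto
      next
        case nB: False
        then have "\<not> R z a" "\<not> R z b" using nA symR unfolding c_def by auto
        then have "reach (sg G (insert e A)) z w \<longleftrightarrow> R z w" for w
          unfolding ins by auto
        then show ?thesis using nA nB unfolding c_def by auto
      qed
    qed
    have aa: "a \<in> c a" "b \<in> c b" unfolding c_def R_def using av by (auto intro: reach.refl)
    have q1: "verts G // krel G (insert e A) = insert (c a \<union> c b) T"
    proof -
      have "verts G // krel G (insert e A) = (\<lambda>z. if z \<in> c a \<union> c b then c a \<union> c b else c z) ` verts G"
        unfolding quot_eq using cl by (auto simp: image_def)
      also have "\<dots> = insert (c a \<union> c b) T" unfolding T_def using aa av by auto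
      finally show ?thesis .
    qed
    have q0: "verts G // krel G A = insert (c a) (insert (c b) T)"
    proof -
      have e1: "verts G // krel G A = c ` verts G" unfolding quot_eq c_def R_def by simp
      have cz: "z \<in> c y \<Longrightarrow> c z = c y" for z y unfolding c_def using symR transR by blast
      have "c ` verts G = insert (c a) (insert (c b) T)"
      proof
        show "c ` verts G \<subseteq> insert (c a) (insert (c b) T)"
          unfolding T_def using cz by blast
      qed (unfold T_def, use av in auto)
      then show ?thesis using e1 by simp
    qed

    have finT: "finite T" unfolding T_def using fin by simp
    have nT: "X \<notin> T" if "a \<in> X \<or> b \<in> X" for X
    proof
      assume "X \<in> T"
      then obtain z where z: "z \<notin> c a" "z \<notin> c b" "X = c z" unfolding T_def by auto
      then have "R z a \<or> R z b" using that unfolding c_def by auto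
      then show False using z symR unfolding c_def by auto
    qed
    have "c a \<noteq> c b" using False aa unfolding c_def by auto
    moreover have "c a \<notin> T" "c b \<notin> T" "c a \<union> c b \<notin> T" using nT aa by auto
    ultimately have "card (verts G // krel G A) = card T + 2"
      "card (verts G // krel G (insert e A)) = card T + 1"
      unfolding q0 q1 using finT by (simp_all add: card_insert_if)
    then have k: "kc G A = card T + 2" "kc G (insert e A) = card T + 1" unfolding kc_def by simp_all
    have "\<not> reach (sg G A) a b" using False unfolding R_def .
    then show ?thesis unfolding k by simp
  qed
qed




lemma class_eq:
  assumes "gwf G" "z \<in> verts G" "z' \<in> verts G"
  shows "({w. reach G z w} = {w. reach G z' w}) \<longleftrightarrow> reach G z z'"
proof
  assume "{w. reach G z w} = {w. reach G z' w}"
  moreover have "reach G z' z'" using assms(3) by (rule reach.refl)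
  ultimately show "reach G z z'" by blast
next
  assume r: "reach G z z'"
  have "reach G z w \<longleftrightarrow> reach G z' w" for w
  proof
    assume "reach G z w" then show "reach G z' w"
      using reach_trans[of G z w z'] reach_sym[OF r assms(1)] by blast
  next
    assume "reach G z' w" then show "reach G z w" using reach_trans[of G z' w z] r by blast
  qed
  then show "{w. reach G z w} = {w. reach G z' w}" by blast
qed

lemma kc_alt: "kc G A = card ((\<lambda>z. {w. reach (sg G A) z w}) ` verts G)"
  unfolding kc_def quot_eq ..

lemma card_image_same_kernel:
  assumes "\<And>z z'. z \<in> V \<Longrightarrow> z' \<in> V \<Longrightarrow> f z = f z' \<longleftrightarrow> g z = g z'"
  shows "card (f ` V) = card (g ` V)"
proof -
  define h where "h y = g (inv_into V f y)" for y
  have fi: "y \<in> f ` V \<Longrightarrow> inv_into V f y \<in> V \<and> f (inv_into V f y) = y" for y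
    by (simp add: inv_into_into f_inv_into_f)
  have "inj_on h (f ` V)"
  proof
    fix y1 y2 assume y: "y1 \<in> f ` V" "y2 \<in> f ` V" "h y1 = h y2"
    then show "y1 = y2" using fi[OF y(1)] fi[OF y(2)] assms unfolding h_def by metis
  qed
  moreover have "h ` f ` V = g ` V"
  proof -
    have "h (f z) = g z" if "z \<in> V" for z
    proof -
      have "f (inv_into V f (f z)) = f z" using fi that by blast
      then show ?thesis unfolding h_def using assms fi that by blast
    qed
    then show ?thesis by (force simp: image_comp)
  qed
  ultimately show ?thesis using card_image by fastforce
qed

lemma kc_map:
  assumes g1: "gwf (sg G A)" and g2: "gwf (sg H B)" and im: "\<mu> ` verts G = verts H"
    and eq: "\<And>p q. p \<in> verts G \<Longrightarrow> q \<in> verts G \<Longrightarrow>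
               reach (sg G A) p q \<longleftrightarrow> reach (sg H B) (\<mu> p) (\<mu> q)"
  shows "kc G A = kc H B"
proof -
  have "card ((\<lambda>z. {w. reach (sg G A) z w}) ` verts G) =
        card ((\<lambda>z. {w. reach (sg H B) (\<mu> z) w}) ` verts G)"
  proof (rule card_image_same_kernel)
    fix z z' assume z: "z \<in> verts G" "z' \<in> verts G"
    have m: "\<mu> z \<in> verts H" "\<mu> z' \<in> verts H" using im z by auto
    show "({w. reach (sg G A) z w} = {w. reach (sg G A) z' w}) =
          ({w. reach (sg H B) (\<mu> z) w} = {w. reach (sg H B) (\<mu> z') w})"
      using class_eq[OF g1, of z z'] class_eq[OF g2, of "\<mu> z" "\<mu> z'"] z m eq[OF z] by simp
  qed
  also have "(\<lambda>z. {w. reach (sg H B) (\<mu> z) w}) ` verts G = (\<lambda>z. {w. reach (sg H B) z w}) ` verts H"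
    unfolding im[symmetric] by (simp add: image_image)
  finally show ?thesis unfolding kc_alt .
qed

lemma kc_cong:
  assumes "gwf (sg G A)" "verts G = verts H" "\<forall>f\<in>A. ends G f = ends H f"
  shows "kc G A = kc H A"
proof -
  have g2: "gwf (sg H A)" using assms unfolding gwf_def by auto
  show ?thesis
  proof (rule kc_map[OF assms(1) g2, of id])
    fix p q
    show "reach (sg G A) p q = reach (sg H A) (id p) (id q)"
    proof
      assume "reach (sg G A) p q" then show "reach (sg H A) (id p) (id q)"
        by (simp, rule reach_mono) (use assms in auto)
    next
      assume "reach (sg H A) (id p) (id q)"
      then have "reach (sg H A) p q" by simp
      then show "reach (sg G A) p q"
        by (rule reach_mono) (use assms in auto)
    qed
  qed (use assms in auto)
qed

lemma sum_Pow_insert: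
  assumes "finite E" "e \<notin> E"
  shows "sum f (Pow (insert e E)) = sum f (Pow E) + sum (\<lambda>A. f (insert e A)) (Pow E)"
proof -
  have d: "Pow E \<inter> insert e ` Pow E = {}" using assms by auto
  have i: "inj_on (insert e) (Pow E)"
  proof (rule inj_onI)
    fix x y assume "x \<in> Pow E" "y \<in> Pow E" "insert e x = insert e y"
    then show "x = y" using assms(2) by (metis Diff_insert_absorb PowD subsetD)
  qed
  show ?thesis unfolding Pow_insert
    using sum.union_disjoint[OF _ _ d, of f] sum.reindex[OF i, of f] assms by simp
qed

lemma sum_Pow_Un:
  assumes "finite E1" "finite E2" "E1 \<inter> E2 = {}"
  shows "(\<Sum>A\<in>Pow (E1 \<union> E2). f A) = (\<Sum>A1\<in>Pow E1. \<Sum>A2\<in>Pow E2. f (A1 \<union> A2))"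
proof -
  have i: "inj_on (\<lambda>(A1, A2). A1 \<union> A2) (Pow E1 \<times> Pow E2)"
  proof (rule inj_onI, clarify)
    fix A1 A2 B1 B2 assume "A1 \<subseteq> E1" "A2 \<subseteq> E2" "B1 \<subseteq> E1" "B2 \<subseteq> E2" "A1 \<union> A2 = B1 \<union> B2"
    then show "A1 = B1 \<and> A2 = B2" using assms(3) by blast
  qed
  have im: "(\<lambda>(A1, A2). A1 \<union> A2) ` (Pow E1 \<times> Pow E2) = Pow (E1 \<union> E2)"
  proof
    show "Pow (E1 \<union> E2) \<subseteq> (\<lambda>(A1, A2). A1 \<union> A2) ` (Pow E1 \<times> Pow E2)"
    proof
      fix A assume "A \<in> Pow (E1 \<union> E2)"
      then have "A = (\<lambda>(A1, A2). A1 \<union> A2) (A \<inter> E1, A \<inter> E2)" "(A \<inter> E1, A \<inter> E2) \<in> Pow E1 \<times> Pow E2"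
        by auto
      then show "A \<in> (\<lambda>(A1, A2). A1 \<union> A2) ` (Pow E1 \<times> Pow E2)" by blast
    qed
  qed auto
  have "(\<Sum>A\<in>Pow (E1 \<union> E2). f A) = (\<Sum>p\<in>Pow E1 \<times> Pow E2. f ((\<lambda>(A1, A2). A1 \<union> A2) p))"
    using sum.reindex[OF i, of f] im by simp
  also have "\<dots> = (\<Sum>A1\<in>Pow E1. \<Sum>A2\<in>Pow E2. f (A1 \<union> A2))"
    by (simp add: sum.cartesian_product case_prod_beta)
  finally show ?thesis .
qed




definition wt :: "('v, 'e) mgraph \<Rightarrow> 'e set \<Rightarrow> real \<Rightarrow> real" where
  "wt G A x = (-1) ^ card (edges G - A) * x ^ card A * x ^ kc G A / x ^ card (verts G)"

definition psi :: "('v, 'e) mgraph \<Rightarrow> real \<Rightarrow> real" where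
  "psi G x = (\<Sum>A\<in>Pow (edges G). wt G A x)"

lemma wf_gwf: "wf_graph G \<Longrightarrow> gwf G"
  unfolding wf_graph_def gwf_def by blast

lemma wf_gwf_sg: "wf_graph G \<Longrightarrow> A \<subseteq> edges G \<Longrightarrow> gwf (sg G A)"
  using gwf_sg wf_gwf by blast

lemma psi_empty:
  assumes "wf_graph G" "edges G = {}" "x \<noteq> 0"
  shows "psi G x = 1"
proof -
  have "kc G {} = card (verts G)" using assms(1) kc_empty unfolding wf_graph_def by blast
  then show ?thesis unfolding psi_def wt_def using assms by simp
qed

lemma psi_split:
  assumes "wf_graph G" "e \<in> edges G"
  shows "psi G x = (\<Sum>A\<in>Pow (edges G - {e}). wt G A x) + (\<Sum>A\<in>Pow (edges G - {e}). wt G (insert e A) x)"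
proof -
  have "edges G = insert e (edges G - {e})" using assms by auto
  moreover have "finite (edges G - {e})" using assms unfolding wf_graph_def by auto
  ultimately show ?thesis unfolding psi_def
    using sum_Pow_insert[of "edges G - {e}" e "\<lambda>A. wt G A x"] by simp
qed

lemma card_diff_insert_Suc:
  assumes "finite E" "e \<in> E" "A \<subseteq> E - {e}"
  shows "card (E - A) = Suc (card (E - {e} - A))" "card (E - insert e A) = card (E - {e} - A)"
proof -
  have "E - A = insert e (E - {e} - A)" using assms by auto
  then show "card (E - A) = Suc (card (E - {e} - A))" using assms by simp
  have "E - insert e A = E - {e} - A" by auto
  then show "card (E - insert e A) = card (E - {e} - A)" by simp
qed

lemma wt_deletion:
  assumes g: "wf_graph G" and d: "is_deletion G e H" and A: "A \<subseteq> edges G - {e}"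
  shows "wt G A x = - wt H A x"
proof -
  have H: "e \<in> edges G" "verts H = verts G" "edges H = edges G - {e}" "\<forall>f\<in>edges H. ends H f = ends G f"
    using d unfolding is_deletion_def by auto
  have fin: "finite (edges G)" using g unfolding wf_graph_def by auto
  have AE: "A \<subseteq> edges G" using A by auto
  have "\<forall>f\<in>A. ends G f = ends H f"
  proof
    fix f assume "f \<in> A"
    then have "f \<in> edges H" using A H(3) by auto
    then show "ends G f = ends H f" using H(4) by simp
  qed
  then have k: "kc G A = kc H A"
    using kc_cong[OF wf_gwf_sg[OF g AE] H(2)[symmetric]] by blast
  have c: "card (edges G - A) = Suc (card (edges H - A))"
    using card_diff_insert_Suc(1)[OF fin H(1) A] unfolding H(3) .
  show ?thesis unfolding wt_def H(2) k c by simp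
qed

lemma psi_deletion_part:
  assumes g: "wf_graph G" and d: "is_deletion G e H"
  shows "(\<Sum>A\<in>Pow (edges G - {e}). wt G A x) = - psi H x"
proof -
  have eH: "edges H = edges G - {e}" using d unfolding is_deletion_def by auto
  have "(\<Sum>A\<in>Pow (edges G - {e}). wt G A x) = (\<Sum>A\<in>Pow (edges G - {e}). - wt H A x)"
    by (rule sum.cong) (use wt_deletion[OF g d] in auto)
  also have "\<dots> = - psi H x" unfolding psi_def eH sum_negf ..
  finally show ?thesis .
qed

lemma del_exists:
  assumes "wf_graph G" "e \<in> edges G"
  shows "is_deletion G e (del_edge G e)" "wf_graph (del_edge G e)"
  using assms unfolding is_deletion_def del_edge_def wf_graph_def by auto

lemma psi_loop:
  assumes g: "wf_graph G" and l: "is_loop G e" and d: "is_deletion G e H" and x: "x \<noteq> 0"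
  shows "psi G x = (x - 1) * psi H x"
proof -
  obtain a where a: "e \<in> edges G" "ends G e = Upair a a" using l unfolding is_loop_def by auto
  have av: "a \<in> verts G" using g a unfolding wf_graph_def by auto
  have fin: "finite (edges G)" using g unfolding wf_graph_def by auto
  have "wt G (insert e A) x = - x * wt G A x" if A: "A \<subseteq> edges G - {e}" for A
  proof -
    have "reach (sg G A) a a" using av by (auto intro: reach.refl)
    have AE: "A \<subseteq> edges G" using A by auto
    have fv: "finite (verts G)" using g unfolding wf_graph_def by auto
    have "int (kc G (insert e A)) = int (kc G A) - (if reach (sg G A) a a then 0 else 1)"
      by (rule kc_insert[OF wf_gwf[OF g] AE a(1) a(2) fv])
    then have k: "kc G (insert e A) = kc G A" using \<open>reach (sg G A) a a\<close> by simp
    have fA: "finite A" using A fin finite_subset by blast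
    have "e \<notin> A" using A by auto
    then have c: "card (insert e A) = Suc (card A)" using fA by simp
    show ?thesis unfolding wt_def k c using card_diff_insert_Suc[OF fin a(1) A] by simp
  qed
  then have "(\<Sum>A\<in>Pow (edges G - {e}). wt G (insert e A) x) = - x * (\<Sum>A\<in>Pow (edges G - {e}). wt G A x)"
    by (simp add: sum_distrib_left)
  then show ?thesis unfolding psi_split[OF g a(1)] psi_deletion_part[OF g d] by (simp add: algebra_simps)
qed

lemma psi_bridge:
  assumes g: "wf_graph G" and b: "has_bridge G" and x: "x \<noteq> 0"
  shows "psi G x = 0"
proof -
  obtain e a b where e: "e \<in> edges G" "ends G e = Upair a b" "\<not> reach (del_edge G e) a b"
    using b unfolding has_bridge_def is_bridge_def by auto
  have fin: "finite (edges G)" "finite (verts G)" using g unfolding wf_graph_def by auto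
  have "wt G (insert e A) x = - wt G A x" if A: "A \<subseteq> edges G - {e}" for A
  proof -
    have "\<not> reach (sg G A) a b"
    proof
      assume "reach (sg G A) a b"
      then have "reach (del_edge G e) a b"
        by (rule reach_mono) (use A in \<open>auto simp: del_edge_def\<close>)
      then show False using e by simp
    qed
    have AE: "A \<subseteq> edges G" using A by auto
    have "int (kc G (insert e A)) = int (kc G A) - (if reach (sg G A) a b then 0 else 1)"
      by (rule kc_insert[OF wf_gwf[OF g] AE e(1) e(2) fin(2)])
    then have k: "int (kc G (insert e A)) = int (kc G A) - 1"
      using \<open>\<not> reach (sg G A) a b\<close> by simp
    then have k2: "kc G A = Suc (kc G (insert e A))" by simp
    have fA: "finite A" using A fin finite_subset by blast
    have "e \<notin> A" using A by auto
    then have c: "card (insert e A) = Suc (card A)" using fA by simp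
    show ?thesis unfolding wt_def k2 c using card_diff_insert_Suc[OF fin(1) e(1) A] by simp
  qed
  then have "(\<Sum>A\<in>Pow (edges G - {e}). wt G (insert e A) x) = - (\<Sum>A\<in>Pow (edges G - {e}). wt G A x)"
    by (simp add: sum_negf[symmetric])
  then show ?thesis unfolding psi_split[OF g e(1)] by simp
qed




lemma contr_same:
  assumes "ends G e = Upair u v" "e \<in> edges G" "a \<in> verts G" "b \<in> verts G"
    and "(if a = v then u else a) = (if b = v then u else b)"
  shows "reach (sg G (insert e A)) a b"
proof (cases "a = b")
  case True then show ?thesis using assms by (auto intro: reach.refl)
next
  case False
  then have "(a = u \<and> b = v) \<or> (a = v \<and> b = u)" using assms(5) by (auto split: if_splits)
  then show ?thesis
  proof
    assume ab: "a = u \<and> b = v"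
    show ?thesis using reach.step[OF reach.refl[of a "sg G (insert e A)"], of e b] assms ab by simp
  next
    assume ab: "a = v \<and> b = u"
    show ?thesis using reach_edge'[OF reach.refl[of a "sg G (insert e A)"], of e b] assms ab by simp
  qed
qed

lemma contr_fwd:
  assumes g: "gwf G" and eu: "ends G e = Upair u v" and e: "e \<in> edges G" and uv: "u \<noteq> v"
    and vH: "verts H = verts G - {v}" and uV: "u \<in> verts G"
    and eH: "\<forall>f\<in>A. ends H f = map_uprod (\<lambda>w. if w = v then u else w) (ends G f)"
    and r: "reach (sg G (insert e A)) p q"
  shows "reach (sg H A) (if p = v then u else p) (if q = v then u else q)"
  using r
proof (induction rule: reach.induct)
  case (refl x)
  then have "(if x = v then u else x) \<in> verts H" using vH uV uv by auto
  then show ?case by (intro reach.refl) simp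
next
  case (step x y f z)
  show ?case
  proof (cases "f = e")
    case True
    then have "Upair y z = Upair u v" using step.hyps(3) eu by (simp del: Upair_inject)
    then have "(if z = v then u else z) = (if y = v then u else y)" using uv by auto
    then show ?thesis using step.IH by simp
  next
    case False
    then have fA: "f \<in> A" using step.hyps(2) by simp
    then have "ends H f = Upair (if y = v then u else y) (if z = v then u else z)"
      using eH step.hyps(3) by simp
    then show ?thesis using reach.step[OF step.IH, of f] fA by simp
  qed
qed

lemma contr_bwd:
  assumes g: "gwf G" and eu: "ends G e = Upair u v" and e: "e \<in> edges G" and A: "A \<subseteq> edges G"
    and eH: "\<forall>f\<in>A. ends H f = map_uprod (\<lambda>w. if w = v then u else w) (ends G f)"
    and r: "reach (sg H A) p' q'" and p: "p \<in> verts G"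
  shows "(if p = v then u else p) = p' \<longrightarrow>
    (\<forall>q\<in>verts G. (if q = v then u else q) = q' \<longrightarrow> reach (sg G (insert e A)) p q)"
  using r
proof (induction rule: reach.induct)
  case (refl x)
  show ?case using contr_same[OF eu e p(1)] by auto
next
  case (step x y f z)
  have fA: "f \<in> A" using step.hyps(2) by simp
  obtain c d where cd: "ends G f = Upair c d" by (cases "ends G f") auto
  have "set_uprod (ends G f) \<subseteq> verts G" using g fA A unfolding gwf_def by blast
  then have cdV: "c \<in> verts G" "d \<in> verts G" using cd by auto
  have hf: "Upair (if c = v then u else c) (if d = v then u else d) = Upair y z"
    using eH fA cd step.hyps(3) by simp
  have fe: "f \<in> edges (sg G (insert e A))" "ends (sg G (insert e A)) f = Upair c d" using fA cd by auto
  show ?case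
  proof (intro ballI impI)
    assume p2: "(if p = v then u else p) = x"
    fix q assume q: "q \<in> verts G" "(if q = v then u else q) = z"
    show "reach (sg G (insert e A)) p q"
    proof (cases "(if c = v then u else c) = y \<and> (if d = v then u else d) = z")
      case True
      have pc: "reach (sg G (insert e A)) p c" using step.IH[rule_format, OF p2 cdV(1)] True by blast
      have pd: "reach (sg G (insert e A)) p d" by (rule reach.step[OF pc fe])
      have dq: "reach (sg G (insert e A)) d q" using contr_same[OF eu e cdV(2) q(1)] True q(2) by simp
      show ?thesis by (rule reach_trans[OF dq pd])
    next
      case False
      have hf2: "((if c = v then u else c) = y \<and> (if d = v then u else d) = z) \<or>
        ((if c = v then u else c) = z \<and> (if d = v then u else d) = y)"
        using hf unfolding Upair_inject by blast
      have F: "(if d = v then u else d) = y" "(if c = v then u else c) = z" using hf2 False by blast+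
      have pd: "reach (sg G (insert e A)) p d" using step.IH[rule_format, OF p2 cdV(2)] F by blast
      have pc: "reach (sg G (insert e A)) p c" by (rule reach_edge'[OF pd fe])
      have cq: "reach (sg G (insert e A)) c q" using contr_same[OF eu e cdV(1) q(1)] F q(2) by simp
      show ?thesis by (rule reach_trans[OF cq pc])
    qed
  qed
qed

lemma psi_delcon:
  assumes g: "wf_graph G" and c: "is_contraction G e H1" and d: "is_deletion G e H2" and x: "x \<noteq> 0"
  shows "psi G x = psi H1 x - psi H2 x"
proof -
  have e: "e \<in> edges G" using c unfolding is_contraction_def by blast
  obtain u v where uv: "u \<noteq> v" and eu: "ends G e = Upair u v" and vH: "verts H1 = verts G - {v}"
    and eH: "edges H1 = edges G - {e}"
    and en: "\<forall>f\<in>edges H1. ends H1 f = map_uprod (\<lambda>w. if w = v then u else w) (ends G f)"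
    using c unfolding is_contraction_def by blast
  define \<mu> where "\<mu> = (\<lambda>w. if w = v then u else w)"
  have gw: "gwf G" using wf_gwf[OF g] .
  have uvV: "u \<in> verts G" "v \<in> verts G" using gw e eu unfolding gwf_def by auto
  have fin: "finite (edges G)" "finite (verts G)" using g unfolding wf_graph_def by auto
  have im: "\<mu> ` verts G = verts H1"
  proof
    show "\<mu> ` verts G \<subseteq> verts H1" unfolding vH \<mu>_def using uvV uv by auto
    show "verts H1 \<subseteq> \<mu> ` verts G"
    proof
      fix w assume "w \<in> verts H1"
      then have "w \<in> verts G" "\<mu> w = w" unfolding vH \<mu>_def by auto
      then show "w \<in> \<mu> ` verts G" by (metis imageI)
    qed
  qed
  have tm: "wt G (insert e A) x = wt H1 A x" if A: "A \<subseteq> edges G - {e}" for A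
  proof -
    have AE: "A \<subseteq> edges G" "insert e A \<subseteq> edges G" using A e by auto
    have eA: "\<forall>f\<in>A. ends H1 f = map_uprod \<mu> (ends G f)" using en A eH unfolding \<mu>_def by auto
    have g1: "gwf (sg G (insert e A))" using gwf_sg[OF gw AE(2)] .
    have g2: "gwf (sg H1 A)" unfolding gwf_def
    proof
      fix f assume "f \<in> edges (sg H1 A)"
      then have f: "f \<in> A" by simp
      have "set_uprod (ends G f) \<subseteq> verts G" using gw f AE unfolding gwf_def by auto
      then have "\<mu> ` set_uprod (ends G f) \<subseteq> verts H1" using im by auto
      then show "set_uprod (ends (sg H1 A) f) \<subseteq> verts (sg H1 A)"
        using eA f by (simp add: uprod.set_map)
    qed
    have k: "kc G (insert e A) = kc H1 A"
    proof (rule kc_map[OF g1 g2 im])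
      fix p q assume pq: "p \<in> verts G" "q \<in> verts G"
      show "reach (sg G (insert e A)) p q = reach (sg H1 A) (\<mu> p) (\<mu> q)"
      proof
        assume "reach (sg G (insert e A)) p q"
        then show "reach (sg H1 A) (\<mu> p) (\<mu> q)"
          using contr_fwd[OF gw eu e uv vH uvV(1)] eA unfolding \<mu>_def by blast
      next
        assume "reach (sg H1 A) (\<mu> p) (\<mu> q)"
        then show "reach (sg G (insert e A)) p q"
          using contr_bwd[OF gw eu e AE(1), of H1, OF eA[unfolded \<mu>_def]] pq unfolding \<mu>_def by blast
      qed
    qed
    have fA: "finite A" using AE fin finite_subset by blast
    have "e \<notin> A" using A by auto
    then have c1: "card (insert e A) = Suc (card A)" using fA by simp
    have c2: "card (edges G - insert e A) = card (edges H1 - A)"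
      using card_diff_insert_Suc(2)[OF fin(1) e A] unfolding eH .
    have c3: "card (verts G) = Suc (card (verts H1))"
      unfolding vH using card_Suc_Diff1[OF fin(2) uvV(2)] by simp
    show ?thesis unfolding wt_def k c1 c2 c3 using x by simp
  qed
  have "(\<Sum>A\<in>Pow (edges G - {e}). wt G (insert e A) x) = psi H1 x"
    unfolding psi_def eH by (rule sum.cong) (use tm in auto)
  then show ?thesis unfolding psi_split[OF g e] psi_deletion_part[OF g d] by simp
qed




lemma union_sym: "is_disjoint_union G G1 G2 \<Longrightarrow> is_disjoint_union G G2 G1"
  unfolding is_disjoint_union_def by blast

lemma union_facts:
  assumes "is_disjoint_union G G1 G2"
  shows "wf_graph G1" "wf_graph G2" "verts G = verts G1 \<union> verts G2" "verts G1 \<inter> verts G2 = {}"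
    "edges G = edges G1 \<union> edges G2" "edges G1 \<inter> edges G2 = {}"
    "\<forall>f\<in>edges G1. ends G f = ends G1 f" "\<forall>f\<in>edges G2. ends G f = ends G2 f"
  using assms unfolding is_disjoint_union_def by blast+

lemma union_wf:
  assumes u: "is_disjoint_union G G1 G2"
  shows "gwf G" "finite (verts G)" "finite (edges G)"
proof -
  note U = union_facts[OF u]
  show "finite (verts G)" "finite (edges G)" using U(1,2,3,5) unfolding wf_graph_def by auto
  show "gwf G" unfolding gwf_def
  proof
    fix f assume "f \<in> edges G"
    then have "f \<in> edges G1 \<or> f \<in> edges G2" using U(5) by blast
    then show "set_uprod (ends G f) \<subseteq> verts G"
    proof
      assume f: "f \<in> edges G1"
      then have "set_uprod (ends G1 f) \<subseteq> verts G1" using U(1) unfolding wf_graph_def by blast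
      then show ?thesis using f U(7) U(3) by auto
    next
      assume f: "f \<in> edges G2"
      then have "set_uprod (ends G2 f) \<subseteq> verts G2" using U(2) unfolding wf_graph_def by blast
      then show ?thesis using f U(8) U(3) by auto
    qed
  qed
qed

lemma union_reach:
  assumes u: "is_disjoint_union G G1 G2" and A: "A \<subseteq> edges G" and a: "a \<in> verts G1"
  shows "reach (sg G A) a b \<longleftrightarrow> reach (sg G1 (A \<inter> edges G1)) a b"
proof
  note U = union_facts[OF u]
  assume r: "reach (sg G A) a b"
  have gH: "gwf (sg G1 (A \<inter> edges G1))" using wf_gwf_sg[OF U(1)] by blast
  show "reach (sg G1 (A \<inter> edges G1)) a b"
  proof (rule reach_restrict[OF r _ gH])
    show "a \<in> verts (sg G1 (A \<inter> edges G1))" using a by simp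
    show "\<forall>f\<in>edges (sg G A). set_uprod (ends (sg G A) f) \<inter> verts (sg G1 (A \<inter> edges G1)) \<noteq> {} \<longrightarrow>
        f \<in> edges (sg G1 (A \<inter> edges G1)) \<and> ends (sg G1 (A \<inter> edges G1)) f = ends (sg G A) f"
    proof (intro ballI impI)
      fix f assume f: "f \<in> edges (sg G A)"
        and ne: "set_uprod (ends (sg G A) f) \<inter> verts (sg G1 (A \<inter> edges G1)) \<noteq> {}"
      have fA: "f \<in> A" using f by simp
      show "f \<in> edges (sg G1 (A \<inter> edges G1)) \<and> ends (sg G1 (A \<inter> edges G1)) f = ends (sg G A) f"
      proof (cases "f \<in> edges G1")
        case True
        then show ?thesis using fA U(7) by simp
      next
        case False
        then have f2: "f \<in> edges G2" using fA A U(5) by blast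
        then have "set_uprod (ends G2 f) \<subseteq> verts G2" using U(2) unfolding wf_graph_def by blast
        then have "set_uprod (ends G f) \<subseteq> verts G2" using f2 U(8) by simp
        then have "set_uprod (ends G f) \<inter> verts G1 = {}" using U(4) by blast
        then show ?thesis using ne by simp
      qed
    qed
  qed
next
  note U = union_facts[OF u]
  assume "reach (sg G1 (A \<inter> edges G1)) a b"
  then show "reach (sg G A) a b"
    by (rule reach_mono) (use U(3,7) in auto)
qed

lemma kc_union_step:
  assumes u: "is_disjoint_union G G1 G2" and F: "F \<subseteq> edges G" and a: "a \<in> edges G1"
  shows "int (kc G (insert a F)) - int (kc G1 (insert a F \<inter> edges G1)) =
         int (kc G F) - int (kc G1 (F \<inter> edges G1))"
proof -
  note U = union_facts[OF u]
  note W = union_wf[OF u]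
  obtain p q where pq: "ends G1 a = Upair p q" by (cases "ends G1 a") auto
  have pqG: "ends G a = Upair p q" using pq U(7) a by simp
  have pqV: "p \<in> verts G1" "q \<in> verts G1" using U(1) a pq unfolding wf_graph_def by auto
  have aG: "a \<in> edges G" using a U(5) by blast
  have fin1: "finite (verts G1)" using U(1) unfolding wf_graph_def by blast
  have k1: "int (kc G (insert a F)) = int (kc G F) - (if reach (sg G F) p q then 0 else 1)"
    by (rule kc_insert[OF W(1) F aG pqG W(2)])
  have i: "insert a F \<inter> edges G1 = insert a (F \<inter> edges G1)" using a by blast
  have k2: "int (kc G1 (insert a (F \<inter> edges G1))) = int (kc G1 (F \<inter> edges G1)) -
       (if reach (sg G1 (F \<inter> edges G1)) p q then 0 else 1)"
    by (rule kc_insert[OF wf_gwf[OF U(1)] _ a pq fin1]) blast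
  have r: "reach (sg G F) p q \<longleftrightarrow> reach (sg G1 (F \<inter> edges G1)) p q"
    by (rule union_reach[OF u F pqV(1)])
  show ?thesis unfolding i k1 k2 r by simp
qed

lemma kc_union:
  assumes u: "is_disjoint_union G G1 G2" and A: "A \<subseteq> edges G"
  shows "int (kc G A) = int (kc G1 (A \<inter> edges G1)) + int (kc G2 (A \<inter> edges G2))"
proof -
  note U = union_facts[OF u]
  note W = union_wf[OF u]
  have finA: "finite A" using A W(3) finite_subset by blast
  show ?thesis using finA A
  proof (induction A rule: finite_subset_induct')
    case empty
    have "kc G {} = card (verts G)" "kc G1 {} = card (verts G1)" "kc G2 {} = card (verts G2)"
      using kc_empty W(2) U(1,2) unfolding wf_graph_def by blast+
    moreover have "card (verts G) = card (verts G1) + card (verts G2)"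
      unfolding U(3) using card_Un_disjoint U(1,2,4) unfolding wf_graph_def by blast
    ultimately show ?case by simp
  next
    case (insert a F)
    have F: "F \<subseteq> edges G" using insert.hyps by blast
    have "a \<in> edges G1 \<or> a \<in> edges G2" using insert.hyps U(5) by blast
    then show ?case
    proof
      assume a: "a \<in> edges G1"
      have "insert a F \<inter> edges G2 = F \<inter> edges G2" using a U(6) by blast
      then show ?thesis using kc_union_step[OF u F a] insert.IH by simp
    next
      assume a: "a \<in> edges G2"
      have "insert a F \<inter> edges G1 = F \<inter> edges G1" using a U(6) by blast
      then show ?thesis using kc_union_step[OF union_sym[OF u] F a] insert.IH by simp
    qed
  qed
qed

lemma psi_union:
  assumes u: "is_disjoint_union G G1 G2" and x: "x \<noteq> 0"
  shows "psi G x = psi G1 x * psi G2 x"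
proof -
  note U = union_facts[OF u]
  note W = union_wf[OF u]
  have fin1: "finite (edges G1)" "finite (verts G1)" using U(1) unfolding wf_graph_def by auto
  have fin2: "finite (edges G2)" "finite (verts G2)" using U(2) unfolding wf_graph_def by auto
  have w: "wt G (A1 \<union> A2) x = wt G1 A1 x * wt G2 A2 x" if A: "A1 \<subseteq> edges G1" "A2 \<subseteq> edges G2" for A1 A2
  proof -
    have AE: "A1 \<union> A2 \<subseteq> edges G" using A U(5) by blast
    have i1: "(A1 \<union> A2) \<inter> edges G1 = A1" using A U(6) by blast
    have i2: "(A1 \<union> A2) \<inter> edges G2 = A2" using A U(6) by blast
    have k: "kc G (A1 \<union> A2) = kc G1 A1 + kc G2 A2" using kc_union[OF u AE] unfolding i1 i2 by simp
    have fA: "finite A1" "finite A2" using A fin1 fin2 finite_subset by blast+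
    have c1: "card (A1 \<union> A2) = card A1 + card A2"
      using card_Un_disjoint[OF fA] A U(6) by blast
    have "edges G - (A1 \<union> A2) = (edges G1 - A1) \<union> (edges G2 - A2)" using A U(5,6) by blast
    then have c2: "card (edges G - (A1 \<union> A2)) = card (edges G1 - A1) + card (edges G2 - A2)"
      using card_Un_disjoint[of "edges G1 - A1" "edges G2 - A2"] fin1 fin2 U(6) by auto
    have c3: "card (verts G) = card (verts G1) + card (verts G2)"
      unfolding U(3) using card_Un_disjoint fin1 fin2 U(4) by blast
    show ?thesis unfolding wt_def k c1 c2 c3 using x by (simp add: power_add field_simps)
  qed
  have "psi G x = (\<Sum>A1\<in>Pow (edges G1). \<Sum>A2\<in>Pow (edges G2). wt G (A1 \<union> A2) x)"
    unfolding psi_def U(5) by (rule sum_Pow_Un[OF fin1(1) fin2(1) U(6)])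
  also have "\<dots> = (\<Sum>A1\<in>Pow (edges G1). \<Sum>A2\<in>Pow (edges G2). wt G1 A1 x * wt G2 A2 x)"
    by (rule sum.cong[OF HOL.refl], rule sum.cong[OF HOL.refl]) (use w in auto)
  also have "\<dots> = psi G1 x * psi G2 x" unfolding psi_def by (simp add: sum_product)
  finally show ?thesis .
qed




lemma flow_rel_psi: "flow_rel G p \<Longrightarrow> x \<noteq> 0 \<Longrightarrow> poly p x = psi G x"
proof (induction rule: flow_rel.induct)
  case (empty G) then show ?case using psi_empty by simp
next
  case (bridge G) then show ?case using psi_bridge by simp
next
  case (union G G1 G2 p1 p2) then show ?case using psi_union[of G G1 G2 x] by simp
next
  case (loop G e H p) then show ?case using psi_loop[of G e H x] by (simp add: algebra_simps)
next
  case (delcon G e H1 H2 p1 p2) then show ?case using psi_delcon[of G e H1 H2 x] by simp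
qed

lemma poly_eq_nonzero:
  fixes p q :: "real poly"
  assumes "\<And>x. x \<noteq> 0 \<Longrightarrow> poly p x = poly q x"
  shows "p = q"
proof (rule ccontr)
  assume "p \<noteq> q"
  then have "p - q \<noteq> 0" by simp
  then have "finite {x. poly (p - q) x = 0}" by (rule poly_roots_finite)
  moreover have "UNIV - {0} \<subseteq> {x. poly (p - q) x = 0}" using assms by auto
  ultimately have "finite (UNIV - {0::real})" using finite_subset by blast
  then show False using infinite_UNIV_char_0[where 'a=real] by simp
qed

lemma flow_rel_unique: "flow_rel G p \<Longrightarrow> flow_rel G q \<Longrightarrow> p = q"
  by (rule poly_eq_nonzero) (simp add: flow_rel_psi)

lemma flow_rel_exists_aux: "card (edges G) = n \<Longrightarrow> wf_graph G \<Longrightarrow> \<exists>p. flow_rel G p"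
proof (induction n arbitrary: G rule: less_induct)
  case (less n)
  note g = less.prems(2)
  have fin: "finite (edges G)" "finite (verts G)" using g unfolding wf_graph_def by auto
  show ?case
  proof (cases "edges G = {}")
    case True then show ?thesis using flow_rel.empty[OF g] by blast
  next
    case ne: False
    show ?thesis
    proof (cases "has_bridge G")
      case True then show ?thesis using flow_rel.bridge[OF g] by blast
    next
      case nb: False
      obtain e where e: "e \<in> edges G" using ne by blast
      have d: "is_deletion G e (del_edge G e)" "wf_graph (del_edge G e)" using del_exists[OF g e] by auto
      have cd: "card (edges (del_edge G e)) < n"
        using e fin less.prems(1) card_gt_0_iff[of "edges G"] by (auto simp: del_edge_def)
      obtain p2 where p2: "flow_rel (del_edge G e) p2" using less.IH[OF cd HOL.refl d(2)] by blast
      show ?thesis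
      proof (cases "is_loop G e")
        case True then show ?thesis using flow_rel.loop[OF g True d(1) p2] by blast
      next
        case nl: False
        obtain a b where ab: "ends G e = Upair a b" by (cases "ends G e") auto
        have anb: "a \<noteq> b" using nl ab e unfolding is_loop_def by auto
        have abV: "a \<in> verts G" "b \<in> verts G" using g e ab unfolding wf_graph_def by auto
        define \<mu> where "\<mu> = (\<lambda>w. if w = b then a else w)"
        define H1 where "H1 = G\<lparr>verts := verts G - {b}, edges := edges G - {e},
                              ends := (\<lambda>f. map_uprod \<mu> (ends G f))\<rparr>"
        have c: "is_contraction G e H1" unfolding is_contraction_def
          using e anb ab unfolding H1_def \<mu>_def by auto
        have wf1: "wf_graph H1" unfolding wf_graph_def
        proof (intro conjI ballI)
          show "finite (verts H1)" "finite (edges H1)" unfolding H1_def using fin by auto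
          fix f assume f: "f \<in> edges H1"
          then have "set_uprod (ends G f) \<subseteq> verts G" using g unfolding H1_def wf_graph_def by auto
          then show "set_uprod (ends H1 f) \<subseteq> verts H1"
            unfolding H1_def \<mu>_def using abV anb by (auto simp: uprod.set_map)
        qed
        have c1: "card (edges H1) < n"
          using e fin less.prems(1) card_gt_0_iff[of "edges G"] unfolding H1_def by auto
        obtain p1 where p1: "flow_rel H1 p1" using less.IH[OF c1 HOL.refl wf1] by blast
        show ?thesis using flow_rel.delcon[OF g nb e nl c d(1) p1 p2] by blast
      qed
    qed
  qed
qed

lemma flow_poly_psi:
  assumes "wf_graph G" "x \<noteq> 0"
  shows "poly (flow_poly G) x = psi G x"
proof -
  obtain p where p: "flow_rel G p" using flow_rel_exists_aux[OF HOL.refl assms(1)] by blast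
  have "flow_poly G = p" unfolding flow_poly_def using p flow_rel_unique by blast
  then show ?thesis using flow_rel_psi[OF p assms(2)] by simp
qed




lemma reach_empty: "reach (sg G {}) x y \<Longrightarrow> x = y"
  by (induction rule: reach.induct) auto

lemma logic_count:
  fixes R :: "'a \<Rightarrow> 'a \<Rightarrow> bool"
  assumes s: "\<And>x y. R x y \<Longrightarrow> R y x" and t: "\<And>x y z. R x y \<Longrightarrow> R y z \<Longrightarrow> R x z"
  shows "(if R p q \<or> (R p u \<and> R v q) \<or> (R p v \<and> R u q) then 0 else 1) =
    (if R p q then 0 else 1) - (if R u v \<or> (R u p \<and> R q v) \<or> (R u q \<and> R p v) then 1 else 0)
      + (if R u v then 1 else (0::int))"
proof (cases "R p q")
  case True
  then have "R u v \<or> (R u p \<and> R q v) \<or> (R u q \<and> R p v) \<longleftrightarrow> R u v" using s t by metis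
  then show ?thesis using True by simp
next
  case F: False
  show ?thesis
  proof (cases "R u v")
    case True
    then have "\<not> ((R p u \<and> R v q) \<or> (R p v \<and> R u q))" using s t F by metis
    then show ?thesis using True F by simp
  next
    case False
    have "(R p u \<and> R v q) \<or> (R p v \<and> R u q) \<longleftrightarrow> (R u p \<and> R q v) \<or> (R u q \<and> R p v)" using s by metis
    then show ?thesis using False F by auto
  qed
qed

locale glue =
  fixes G G1 G2 :: "('v, 'e) mgraph" and u v :: 'v and e0 :: 'e
  assumes wfG: "wf_graph G" and sub1: "is_subgraph G1 G" and sub2: "is_subgraph G2 G"
    and uv: "u \<noteq> v" and VI: "verts G1 \<inter> verts G2 = {u, v}" and VU: "verts G1 \<union> verts G2 = verts G"
    and EI: "edges G1 \<inter> edges G2 = {}" and EU: "edges G1 \<union> edges G2 = edges G"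
    and e0: "e0 \<notin> edges G"
begin

lemma glue_sym: "glue G G2 G1 u v e0"
  using wfG sub1 sub2 uv VI VU EI EU e0 unfolding glue_def by blast

abbreviation "H1 \<equiv> add_edge G1 e0 u v"

lemma facts1:
  shows "wf_graph G1" "verts G1 \<subseteq> verts G" "edges G1 \<subseteq> edges G" "\<forall>f\<in>edges G1. ends G1 f = ends G f"
    "u \<in> verts G1" "v \<in> verts G1" "u \<in> verts G2" "v \<in> verts G2" "e0 \<notin> edges G1" "gwf G"
  using sub1 VI e0 EU wf_gwf[OF wfG] unfolding is_subgraph_def by auto

lemma facts2:
  shows "wf_graph G2" "edges G2 \<subseteq> edges G" "\<forall>f\<in>edges G2. ends G2 f = ends G f"
  using sub2 unfolding is_subgraph_def by auto

lemma H1_simps: "verts H1 = verts G1" "edges H1 = insert e0 (edges G1)" "ends H1 e0 = Upair u v"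
    "f \<noteq> e0 \<Longrightarrow> ends H1 f = ends G1 f"
  unfolding add_edge_def by auto

lemma wf_H1: "wf_graph H1"
  using facts1(1,5,6) unfolding wf_graph_def add_edge_def by auto

definition P2 :: "'e set \<Rightarrow> bool" where "P2 A = reach (sg G2 (A \<inter> edges G2)) u v"
definition X1 :: "'e set \<Rightarrow> 'e set" where "X1 A = A \<inter> edges G1 \<union> (if P2 A then {e0} else {})"

lemma X1_sub: "X1 A \<subseteq> edges H1" unfolding X1_def H1_simps by auto

lemma gwfS: "gwf (sg H1 (X1 A))" using wf_gwf_sg[OF wf_H1 X1_sub] .

lemma gwfR2: "gwf (sg G2 (A \<inter> edges G2))" using wf_gwf_sg[OF facts2(1)] by blast

lemma glue_K:
  assumes w: "w \<in> verts G1"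
    and Q0: "(w \<in> verts G1 \<and> reach (sg H1 (X1 A)) x w) \<or>
     (reach (sg H1 (X1 A)) x u \<and> reach (sg G2 (A \<inter> edges G2)) u w) \<or>
     (reach (sg H1 (X1 A)) x v \<and> reach (sg G2 (A \<inter> edges G2)) v w)"
  shows "reach (sg H1 (X1 A)) x w"
proof -
  define S where "S = reach (sg H1 (X1 A))"
  define R2 where "R2 = reach (sg G2 (A \<inter> edges G2))"
  have Q: "(w \<in> verts G1 \<and> S x w) \<or> (S x u \<and> R2 u w) \<or> (S x v \<and> R2 v w)"
    using Q0 unfolding S_def R2_def .
  have Suv: "P2 A \<Longrightarrow> S u v" unfolding S_def
    using reach.step[OF reach.refl[of u "sg H1 (X1 A)"], of e0 v] facts1(5) H1_simps(1,3)
    unfolding X1_def by simp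
  have Svu: "P2 A \<Longrightarrow> S v u" using reach_sym[OF Suv[unfolded S_def] gwfS] unfolding S_def .
  have P2uv: "R2 u v \<Longrightarrow> P2 A" "R2 v u \<Longrightarrow> P2 A" unfolding R2_def P2_def
    using reach_sym[OF _ gwfR2] by blast+
  have R2V: "R2 p q \<Longrightarrow> q \<in> verts G2" for p q
    unfolding R2_def using reach_verts2[OF _ gwfR2] by simp
  have c: "w \<in> verts G2 \<Longrightarrow> w = u \<or> w = v" using w VI by blast
  from Q have "S x w"
  proof (elim disjE conjE)
    assume "S x u" "R2 u w"
    then have "w = u \<or> w = v" using c R2V by blast
    then show ?thesis
    proof
      assume "w = v" then show ?thesis using \<open>S x u\<close> \<open>R2 u w\<close> Suv P2uv reach_trans
        unfolding S_def by metis
    qed (use \<open>S x u\<close> in simp)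
  next
    assume "S x v" "R2 v w"
    then have "w = u \<or> w = v" using c R2V by blast
    then show ?thesis
    proof
      assume "w = u" then show ?thesis using \<open>S x v\<close> \<open>R2 v w\<close> Svu P2uv reach_trans
        unfolding S_def by metis
    qed (use \<open>S x v\<close> in simp)
  qed simp
  then show ?thesis unfolding S_def .
qed

lemma glue_fwd:
  assumes A: "A \<subseteq> edges G" and r: "reach (sg G A) a z"
  shows "a \<in> verts G1 \<longrightarrow> ((z \<in> verts G1 \<and> reach (sg H1 (X1 A)) a z) \<or>
     (reach (sg H1 (X1 A)) a u \<and> reach (sg G2 (A \<inter> edges G2)) u z) \<or>
     (reach (sg H1 (X1 A)) a v \<and> reach (sg G2 (A \<inter> edges G2)) v z))"
  using r
proof (induction rule: reach.induct)
  case (refl x)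
  show ?case
  proof
    assume "x \<in> verts G1"
    then have "reach (sg H1 (X1 A)) x x" by (intro reach.refl) (simp add: H1_simps)
    then show "(x \<in> verts G1 \<and> reach (sg H1 (X1 A)) x x) \<or>
     (reach (sg H1 (X1 A)) x u \<and> reach (sg G2 (A \<inter> edges G2)) u x) \<or>
     (reach (sg H1 (X1 A)) x v \<and> reach (sg G2 (A \<inter> edges G2)) v x)" using \<open>x \<in> verts G1\<close> by blast
  qed
next
  case (step x y f z)
  define S where "S = reach (sg H1 (X1 A))"
  define R2 where "R2 = reach (sg G2 (A \<inter> edges G2))"
  have K: "S x w" if w: "w \<in> verts G1"
    and Q: "(w \<in> verts G1 \<and> S x w) \<or> (S x u \<and> R2 u w) \<or> (S x v \<and> R2 v w)" for w
    using glue_K[OF w Q[unfolded S_def R2_def]] unfolding S_def .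
  show ?case
  proof
    assume xV: "x \<in> verts G1"
    have Qy: "(y \<in> verts G1 \<and> S x y) \<or> (S x u \<and> R2 u y) \<or> (S x v \<and> R2 v y)"
      using step.IH xV unfolding S_def R2_def by blast
    have fA: "f \<in> A" using step.hyps(2) by simp
    have "f \<in> edges G1 \<or> f \<in> edges G2" using fA A EU by blast
    then have concl: "(z \<in> verts G1 \<and> S x z) \<or> (S x u \<and> R2 u z) \<or> (S x v \<and> R2 v z)"
    proof
      assume f1: "f \<in> edges G1"
      have yz: "ends G1 f = Upair y z" using f1 facts1(4) step.hyps(3) by simp
      have "set_uprod (ends G1 f) \<subseteq> verts G1" using facts1(1) f1 unfolding wf_graph_def by blast
      then have yzV: "y \<in> verts G1" "z \<in> verts G1" using yz by auto
      have Sxy: "S x y" by (rule K[OF yzV(1) Qy])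
      have fne: "f \<noteq> e0" using f1 facts1(9) by blast
      have "f \<in> edges (sg H1 (X1 A))" "ends (sg H1 (X1 A)) f = Upair y z"
        using f1 fA fne yz H1_simps(4)[OF fne] unfolding X1_def by auto
      then have "S x z" using reach.step[OF Sxy[unfolded S_def]] unfolding S_def by blast
      then show ?thesis using yzV by blast
    next
      assume f2: "f \<in> edges G2"
      have yz: "ends G2 f = Upair y z" using f2 facts2(3) step.hyps(3) by simp
      have fe: "f \<in> edges (sg G2 (A \<inter> edges G2))" "ends (sg G2 (A \<inter> edges G2)) f = Upair y z"
        using f2 fA yz by auto
      have "set_uprod (ends G2 f) \<subseteq> verts G2" using facts2(1) f2 unfolding wf_graph_def by blast
      then have yV: "y \<in> verts G2" using yz by auto
      have uv2: "R2 u u" "R2 v v" unfolding R2_def using facts1(7,8) by (auto intro: reach.refl)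
      have "(S x u \<and> R2 u y) \<or> (S x v \<and> R2 v y)"
      proof -
        { assume "y \<in> verts G1" "S x y"
          then have "y = u \<or> y = v" using yV VI by blast
          then have ?thesis using \<open>S x y\<close> uv2 by blast }
        then show ?thesis using Qy by blast
      qed
      then show ?thesis using reach.step[OF _ fe] unfolding R2_def by blast
    qed
    then show "(z \<in> verts G1 \<and> reach (sg H1 (X1 A)) x z) \<or>
     (reach (sg H1 (X1 A)) x u \<and> reach (sg G2 (A \<inter> edges G2)) u z) \<or>
     (reach (sg H1 (X1 A)) x v \<and> reach (sg G2 (A \<inter> edges G2)) v z)" unfolding S_def R2_def .
  qed
qed

lemma glue_bwd:
  assumes A: "A \<subseteq> edges G" and r: "reach (sg H1 (X1 A)) a b"
  shows "reach (sg G A) a b"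
  using r
proof (induction rule: reach.induct)
  case (refl x)
  then have "x \<in> verts G" using facts1(2) H1_simps(1) by auto
  then show ?case by (intro reach.refl) simp
next
  case (step x y f z)
  have gA: "gwf (sg G A)" using gwf_sg[OF facts1(10) A] .
  show ?case
  proof (cases "f = e0")
    case True
    then have P: "P2 A" using step.hyps(2) e0 facts1(9) unfolding X1_def by (auto split: if_splits)
    have ruv: "reach (sg G A) u v" using P unfolding P2_def
    proof (rule reach_mono)
      show "verts (sg G2 (A \<inter> edges G2)) \<subseteq> verts (sg G A)" using VU by auto
      show "\<forall>f\<in>edges (sg G2 (A \<inter> edges G2)). f \<in> edges (sg G A) \<and>
          ends (sg G A) f = ends (sg G2 (A \<inter> edges G2)) f"
      proof
        fix f assume "f \<in> edges (sg G2 (A \<inter> edges G2))"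
        then have "f \<in> A" "f \<in> edges G2" by auto
        then show "f \<in> edges (sg G A) \<and> ends (sg G A) f = ends (sg G2 (A \<inter> edges G2)) f"
          using facts2(3) by simp
      qed
    qed
    have rvu: "reach (sg G A) v u" using reach_sym[OF ruv gA] .
    have "Upair y z = Upair u v" using step.hyps(3) True H1_simps(3) by (simp del: Upair_inject)
    then have "(y = u \<and> z = v) \<or> (y = v \<and> z = u)" by auto
    then have ryz: "reach (sg G A) y z" using ruv rvu by (elim disjE) simp_all
    show ?thesis by (rule reach_trans[OF ryz step.IH])
  next
    case False
    then have f: "f \<in> A" "f \<in> edges G1" using step.hyps(2) unfolding X1_def by (auto split: if_splits)
    have "ends G1 f = ends G f" using facts1(4) f(2) by blast
    then have "ends G f = Upair y z" using step.hyps(3) H1_simps(4)[OF False] by simp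
    then show ?thesis using reach.step[OF step.IH, of f z] f by simp
  qed
qed

lemma glue_reach:
  assumes A: "A \<subseteq> edges G" and ab: "a \<in> verts G1" "b \<in> verts G1"
  shows "reach (sg G A) a b \<longleftrightarrow> reach (sg H1 (X1 A)) a b"
proof
  assume "reach (sg G A) a b"
  from glue_fwd[OF A this] ab(1) have "(b \<in> verts G1 \<and> reach (sg H1 (X1 A)) a b) \<or>
     (reach (sg H1 (X1 A)) a u \<and> reach (sg G2 (A \<inter> edges G2)) u b) \<or>
     (reach (sg H1 (X1 A)) a v \<and> reach (sg G2 (A \<inter> edges G2)) v b)" by blast
  then show "reach (sg H1 (X1 A)) a b" by (rule glue_K[OF ab(2)])
next
  assume "reach (sg H1 (X1 A)) a b"
  then show "reach (sg G A) a b" by (rule glue_bwd[OF A])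
qed

end




context glue
begin

lemma reach_H1_G1:
  assumes "B \<subseteq> edges G1"
  shows "reach (sg H1 B) p q \<longleftrightarrow> reach (sg G1 B) p q"
proof
  have ne: "f \<in> B \<Longrightarrow> f \<noteq> e0" for f using assms facts1(9) by blast
  assume "reach (sg H1 B) p q"
  then show "reach (sg G1 B) p q"
  proof (rule reach_mono)
    show "verts (sg H1 B) \<subseteq> verts (sg G1 B)" by (simp add: H1_simps)
    show "\<forall>f\<in>edges (sg H1 B). f \<in> edges (sg G1 B) \<and> ends (sg G1 B) f = ends (sg H1 B) f"
      using H1_simps(4) ne by simp
  qed
next
  have ne: "f \<in> B \<Longrightarrow> f \<noteq> e0" for f using assms facts1(9) by blast
  assume "reach (sg G1 B) p q"
  then show "reach (sg H1 B) p q"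
  proof (rule reach_mono)
    show "verts (sg G1 B) \<subseteq> verts (sg H1 B)" by (simp add: H1_simps)
    show "\<forall>f\<in>edges (sg G1 B). f \<in> edges (sg H1 B) \<and> ends (sg H1 B) f = ends (sg G1 B) f"
      using H1_simps(4) ne by simp
  qed
qed

lemma glue_step:
  assumes F: "F \<subseteq> edges G" and a: "a \<in> edges G1"
  shows "int (kc G (insert a F)) - int (kc G1 (insert a F \<inter> edges G1))
      - (if reach (sg G1 (insert a F \<inter> edges G1)) u v \<and> reach (sg G2 (insert a F \<inter> edges G2)) u v then 1 else 0)
    = int (kc G F) - int (kc G1 (F \<inter> edges G1))
      - (if reach (sg G1 (F \<inter> edges G1)) u v \<and> reach (sg G2 (F \<inter> edges G2)) u v then 1 else 0)"
proof -
  obtain p q where pq: "ends G1 a = Upair p q" by (cases "ends G1 a") auto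
  have pqG: "ends G a = Upair p q" using pq facts1(4) a by simp
  have pqV: "p \<in> verts G1" "q \<in> verts G1" using facts1(1) a pq unfolding wf_graph_def by auto
  have aG: "a \<in> edges G" using a facts1(3) by blast
  have finV: "finite (verts G)" using wfG unfolding wf_graph_def by blast
  have fin1: "finite (verts G1)" using facts1(1) unfolding wf_graph_def by blast
  have a2: "a \<notin> edges G2" using a EI by blast
  have i2: "insert a F \<inter> edges G2 = F \<inter> edges G2" using a2 by blast
  have i1: "insert a F \<inter> edges G1 = insert a (F \<inter> edges G1)" using a by blast
  define R1 where "R1 = reach (sg G1 (F \<inter> edges G1))"
  have g1: "gwf (sg G1 (F \<inter> edges G1))" using wf_gwf_sg[OF facts1(1)] by blast
  have sR: "R1 x y \<Longrightarrow> R1 y x" for x y unfolding R1_def using reach_sym[OF _ g1] .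
  have tR: "R1 x y \<Longrightarrow> R1 y z \<Longrightarrow> R1 x z" for x y z unfolding R1_def using reach_trans by metis
  have k1: "int (kc G (insert a F)) = int (kc G F) - (if reach (sg G F) p q then 0 else 1)"
    by (rule kc_insert[OF facts1(10) F aG pqG finV])
  have k2: "int (kc G1 (insert a (F \<inter> edges G1))) = int (kc G1 (F \<inter> edges G1)) -
       (if reach (sg G1 (F \<inter> edges G1)) p q then 0 else 1)"
    by (rule kc_insert[OF wf_gwf[OF facts1(1)] _ a pq fin1]) blast
  have P1': "reach (sg G1 (insert a (F \<inter> edges G1))) u v \<longleftrightarrow>
      R1 u v \<or> (R1 u p \<and> R1 q v) \<or> (R1 u q \<and> R1 p v)"
    unfolding R1_def by (rule reach_insert[OF g1 pq pqV])
  have RG: "reach (sg G F) p q \<longleftrightarrow> reach (sg H1 (X1 F)) p q" by (rule glue_reach[OF F pqV])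
  have hb: "reach (sg H1 (F \<inter> edges G1)) x y \<longleftrightarrow> R1 x y" for x y
    unfolding R1_def by (rule reach_H1_G1) blast
  define P2F where "P2F = reach (sg G2 (F \<inter> edges G2)) u v"
  show ?thesis
  proof (cases P2F)
    case True
    have X: "X1 F = insert e0 (F \<inter> edges G1)" unfolding X1_def P2_def using True P2F_def by auto
    have gH: "gwf (sg H1 (F \<inter> edges G1))" using wf_gwf_sg[OF wf_H1] H1_simps(2) by blast
    have uvH: "u \<in> verts H1" "v \<in> verts H1" using facts1(5,6) H1_simps(1) by auto
    have "reach (sg H1 (X1 F)) p q \<longleftrightarrow> reach (sg H1 (F \<inter> edges G1)) p q \<or>
       (reach (sg H1 (F \<inter> edges G1)) p u \<and> reach (sg H1 (F \<inter> edges G1)) v q) \<or>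
       (reach (sg H1 (F \<inter> edges G1)) p v \<and> reach (sg H1 (F \<inter> edges G1)) u q)"
      unfolding X using reach_insert[OF gH _ uvH] H1_simps(3) by (simp add: sg_def)
    then have RG2: "reach (sg G F) p q \<longleftrightarrow> R1 p q \<or> (R1 p u \<and> R1 v q) \<or> (R1 p v \<and> R1 u q)"
      unfolding RG hb by simp
    have L: "(if R1 p q \<or> (R1 p u \<and> R1 v q) \<or> (R1 p v \<and> R1 u q) then 0 else 1) =
      (if R1 p q then 0 else 1) - (if R1 u v \<or> (R1 u p \<and> R1 q v) \<or> (R1 u q \<and> R1 p v) then 1 else 0)
      + (if R1 u v then 1 else (0::int))"
      by (rule logic_count[OF sR tR])
    show ?thesis unfolding i1 i2 k1 k2 RG2 P1' using True L unfolding P2F_def R1_def[symmetric] by simp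
  next
    case False
    have X: "X1 F = F \<inter> edges G1" unfolding X1_def P2_def using False P2F_def by auto
    have RG2: "reach (sg G F) p q \<longleftrightarrow> R1 p q"
      unfolding RG X hb ..
    show ?thesis unfolding i1 i2 k1 k2 RG2 using False unfolding P2F_def R1_def[symmetric] by simp
  qed
qed

lemma kc_glue:
  assumes A: "A \<subseteq> edges G"
  shows "int (kc G A) + 2 = int (kc G1 (A \<inter> edges G1)) + int (kc G2 (A \<inter> edges G2))
     + (if reach (sg G1 (A \<inter> edges G1)) u v \<and> reach (sg G2 (A \<inter> edges G2)) u v then 1 else 0)"
proof -
  have finE: "finite (edges G)" using wfG unfolding wf_graph_def by blast
  have finA: "finite A" using A finE finite_subset by blast
  show ?thesis using finA A
  proof (induction A rule: finite_subset_induct')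
    case empty
    have fV: "finite (verts G)" "finite (verts G1)" "finite (verts G2)"
      using wfG facts1(1) facts2(1) unfolding wf_graph_def by blast+
    have "kc G {} = card (verts G)" "kc G1 {} = card (verts G1)" "kc G2 {} = card (verts G2)"
      using kc_empty[OF fV(1)] kc_empty[OF fV(2)] kc_empty[OF fV(3)] by simp_all
    moreover have "card (verts G1) + card (verts G2) = card (verts G) + 2"
      using card_Un_Int[OF fV(2,3)] VU VI uv by simp
    moreover have "\<not> reach (sg G1 {}) u v" using reach_empty[of G1 u v] uv by blast
    ultimately show ?case by simp
  next
    case (insert a F)
    have "a \<in> edges G1 \<or> a \<in> edges G2" using insert.hyps EU by blast
    then show ?case
    proof
      assume a: "a \<in> edges G1"
      have i2: "insert a F \<inter> edges G2 = F \<inter> edges G2" using a EI by blast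
      show ?thesis using glue_step[OF insert.hyps(3) a] insert.IH unfolding i2 by linarith
    next
      assume a: "a \<in> edges G2"
      have i1: "insert a F \<inter> edges G1 = F \<inter> edges G1" using a EI by blast
      have cc: "(P \<and> Q) = (Q \<and> P)" for P Q by blast
      show ?thesis using glue.glue_step[OF glue_sym insert.hyps(3) a] insert.IH
        unfolding i1 cc[of "reach (sg G2 _) u v"] by linarith
    qed
  qed
qed

end




definition Cf :: "('v, 'e) mgraph \<Rightarrow> 'v \<Rightarrow> 'v \<Rightarrow> real \<Rightarrow> real" where
  "Cf H a b x = (\<Sum>A\<in>Pow (edges H). if reach (sg H A) a b then wt H A x else 0)"

context glue
begin

lemma psi_H1:
  assumes x: "x \<noteq> 0"
  shows "psi H1 x = (x - 1) * Cf G1 u v x"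
proof -
  have e0H: "e0 \<in> edges H1" using H1_simps(2) by simp
  have EH: "edges H1 - {e0} = edges G1" using H1_simps(2) facts1(9) by auto
  have agree: "\<forall>f\<in>edges G1. ends G1 f = ends H1 f" using H1_simps(4) facts1(9) by metis
  have del: "is_deletion H1 e0 G1" unfolding is_deletion_def
    using e0H EH H1_simps(1) agree by simp
  have finE: "finite (edges G1)" using facts1(1) unfolding wf_graph_def by blast
  have finV: "finite (verts H1)" using wf_H1 unfolding wf_graph_def by blast
  have w: "wt H1 (insert e0 A) x = wt G1 A x + (x - 1) * (if reach (sg G1 A) u v then wt G1 A x else 0)"
    if A: "A \<subseteq> edges G1" for A
  proof -
    have AH: "A \<subseteq> edges H1" using A H1_simps(2) by auto
    have ki: "int (kc H1 (insert e0 A)) = int (kc H1 A) - (if reach (sg H1 A) u v then 0 else 1)"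
      by (rule kc_insert[OF wf_gwf[OF wf_H1] AH e0H H1_simps(3) finV])
    have rr: "reach (sg H1 A) u v \<longleftrightarrow> reach (sg G1 A) u v" by (rule reach_H1_G1[OF A])
    have ne: "\<forall>f\<in>A. ends H1 f = ends G1 f" using A facts1(9) H1_simps(4) by (metis subsetD)
    have kk: "kc H1 A = kc G1 A"
      by (rule kc_cong[OF wf_gwf_sg[OF wf_H1 AH] H1_simps(1) ne])
    have fA: "finite A" using A finE finite_subset by blast
    have e0A: "e0 \<notin> A" using A facts1(9) by blast
    have c1: "card (insert e0 A) = Suc (card A)" using fA e0A by simp
    have "edges H1 - insert e0 A = edges G1 - A" using EH by auto
    then have c2: "card (edges H1 - insert e0 A) = card (edges G1 - A)" by simp
    show ?thesis
    proof (cases "reach (sg G1 A) u v")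
      case True
      then have k: "kc H1 (insert e0 A) = kc G1 A" using ki rr kk by simp
      show ?thesis unfolding wt_def k c1 c2 H1_simps(1) using True x by (simp add: field_simps)
    next
      case False
      then have k: "kc G1 A = Suc (kc H1 (insert e0 A))" using ki rr kk by simp
      show ?thesis unfolding wt_def k c1 c2 H1_simps(1) using False x by (simp add: field_simps)
    qed
  qed
  have "psi H1 x = - psi G1 x + (\<Sum>A\<in>Pow (edges G1). wt H1 (insert e0 A) x)"
    using psi_split[OF wf_H1 e0H] psi_deletion_part[OF wf_H1 del] unfolding EH by simp
  also have "(\<Sum>A\<in>Pow (edges G1). wt H1 (insert e0 A) x) =
      (\<Sum>A\<in>Pow (edges G1). wt G1 A x + (x - 1) * (if reach (sg G1 A) u v then wt G1 A x else 0))"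
    by (rule sum.cong[OF HOL.refl]) (use w in auto)
  also have "\<dots> = psi G1 x + (x - 1) * Cf G1 u v x"
    unfolding psi_def Cf_def sum.distrib sum_distrib_left ..
  finally show ?thesis by simp
qed

lemma wt_glue:
  assumes x: "x \<noteq> 0" and A: "A1 \<subseteq> edges G1" "A2 \<subseteq> edges G2"
  shows "wt G (A1 \<union> A2) x = wt G1 A1 x * wt G2 A2 x *
           (if reach (sg G1 A1) u v \<and> reach (sg G2 A2) u v then x else 1)"
proof -
  define b where "b = (reach (sg G1 A1) u v \<and> reach (sg G2 A2) u v)"
  have fin1: "finite (edges G1)" "finite (verts G1)" using facts1(1) unfolding wf_graph_def by auto
  have fin2: "finite (edges G2)" "finite (verts G2)" using facts2(1) unfolding wf_graph_def by auto
  have AE: "A1 \<union> A2 \<subseteq> edges G" using A EU by blast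
  have i1: "(A1 \<union> A2) \<inter> edges G1 = A1" using A EI by blast
  have i2: "(A1 \<union> A2) \<inter> edges G2 = A2" using A EI by blast
  have kgi: "int (kc G (A1 \<union> A2)) + 2 = int (kc G1 A1) + int (kc G2 A2) + (if b then 1 else 0)"
    using kc_glue[OF AE] unfolding i1 i2 b_def .
  have kg: "kc G (A1 \<union> A2) + 2 = kc G1 A1 + kc G2 A2 + (if b then 1 else 0)"
    using kgi by (cases b) simp_all
  have fA: "finite A1" "finite A2" using A fin1 fin2 finite_subset by blast+
  have cA: "card (A1 \<union> A2) = card A1 + card A2"
    using card_Un_disjoint[OF fA] A EI by blast
  have "edges G - (A1 \<union> A2) = (edges G1 - A1) \<union> (edges G2 - A2)" using A EU EI by blast
  then have cE: "card (edges G - (A1 \<union> A2)) = card (edges G1 - A1) + card (edges G2 - A2)"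
    using card_Un_disjoint[of "edges G1 - A1" "edges G2 - A2"] fin1 fin2 EI by auto
  have cV: "card (verts G) + 2 = card (verts G1) + card (verts G2)"
    using card_Un_Int[OF fin1(2) fin2(2)] VU VI uv by simp
  have q: "x ^ kc G (A1 \<union> A2) / x ^ card (verts G) =
      x ^ (kc G (A1 \<union> A2) + 2) / x ^ (card (verts G) + 2)"
    using x by (simp add: power_add)
  have "wt G (A1 \<union> A2) x = (-1) ^ card (edges G - (A1 \<union> A2)) * x ^ card (A1 \<union> A2) *
      (x ^ kc G (A1 \<union> A2) / x ^ card (verts G))" unfolding wt_def by simp
  also have "\<dots> = (-1) ^ (card (edges G1 - A1) + card (edges G2 - A2)) * x ^ (card A1 + card A2) *
      (x ^ (kc G1 A1 + kc G2 A2 + (if b then 1 else 0)) / x ^ (card (verts G1) + card (verts G2)))"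
    unfolding q kg cV cE cA ..
  also have "\<dots> = wt G1 A1 x * wt G2 A2 x * (if b then x else 1)"
    unfolding wt_def using x by (cases b) (simp_all add: power_add field_simps)
  finally show ?thesis unfolding b_def .
qed

lemma psi_glue:
  assumes x: "x \<noteq> 0"
  shows "psi G x = psi G1 x * psi G2 x + (x - 1) * Cf G1 u v x * Cf G2 u v x"
proof -
  have fin1: "finite (edges G1)" using facts1(1) unfolding wf_graph_def by auto
  have fin2: "finite (edges G2)" using facts2(1) unfolding wf_graph_def by auto
  have w: "wt G (A1 \<union> A2) x = wt G1 A1 x * wt G2 A2 x +
     (x - 1) * ((if reach (sg G1 A1) u v then wt G1 A1 x else 0) *
                (if reach (sg G2 A2) u v then wt G2 A2 x else 0))"
    if A: "A1 \<subseteq> edges G1" "A2 \<subseteq> edges G2" for A1 A2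
    unfolding wt_glue[OF x A] by (simp add: algebra_simps)
  have "psi G x = (\<Sum>A1\<in>Pow (edges G1). \<Sum>A2\<in>Pow (edges G2). wt G (A1 \<union> A2) x)"
    unfolding psi_def EU[symmetric] by (rule sum_Pow_Un[OF fin1 fin2 EI])
  also have "\<dots> = (\<Sum>A1\<in>Pow (edges G1). \<Sum>A2\<in>Pow (edges G2). wt G1 A1 x * wt G2 A2 x +
     (x - 1) * ((if reach (sg G1 A1) u v then wt G1 A1 x else 0) *
                (if reach (sg G2 A2) u v then wt G2 A2 x else 0)))"
    by (rule sum.cong[OF HOL.refl], rule sum.cong[OF HOL.refl]) (use w in auto)
  also have "\<dots> = psi G1 x * psi G2 x + (x - 1) * Cf G1 u v x * Cf G2 u v x"
    unfolding psi_def Cf_def sum.distrib sum_product sum_distrib_left[symmetric] mult.assoc ..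
  finally show ?thesis .
qed

end




theorem lemma2p6:
  fixes G G1 G2 :: "('v, 'e) mgraph" and u v :: 'v and e0 :: 'e and lam :: real
  assumes "wf_graph G" and "non_separable G"
    and "is_subgraph G1 G" and "is_subgraph G2 G"
    and "u \<noteq> v" and "verts G1 \<inter> verts G2 = {u, v}"
    and "verts G1 \<union> verts G2 = verts G"
    and "edges G1 \<inter> edges G2 = {}" and "edges G1 \<union> edges G2 = edges G"
    and "e0 \<notin> edges G"
    and "lam \<noteq> 1"
  shows "poly (flow_poly G) lam =
           poly (flow_poly (add_edge G1 e0 u v)) lam * poly (flow_poly (add_edge G2 e0 u v)) lam
             / (lam - 1)
           + poly (flow_poly G1) lam * poly (flow_poly G2) lam"
proof -
  have gl: "glue G G1 G2 u v e0" unfolding glue_def using assms by blast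
  interpret glue G G1 G2 u v e0 by (rule gl)
  have wf2': "wf_graph (add_edge G2 e0 u v)" by (rule glue.wf_H1[OF glue_sym])
  define P where "P = [:-1, 1:] * flow_poly G - flow_poly (add_edge G1 e0 u v) * flow_poly (add_edge G2 e0 u v)
     - [:-1, 1:] * flow_poly G1 * flow_poly G2"
  have "P = 0"
  proof (rule poly_eq_nonzero)
    fix x :: real assume x: "x \<noteq> 0"
    have h1: "psi (add_edge G1 e0 u v) x = (x - 1) * Cf G1 u v x" by (rule psi_H1[OF x])
    have h2: "psi (add_edge G2 e0 u v) x = (x - 1) * Cf G2 u v x"
      by (rule glue.psi_H1[OF glue_sym x])
    have hg: "psi G x = psi G1 x * psi G2 x + (x - 1) * Cf G1 u v x * Cf G2 u v x"
      by (rule psi_glue[OF x])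
    have "poly P x = (x - 1) * psi G x - psi (add_edge G1 e0 u v) x * psi (add_edge G2 e0 u v) x
        - (x - 1) * psi G1 x * psi G2 x"
      unfolding P_def by (simp add: flow_poly_psi[OF wfG x] flow_poly_psi[OF wf_H1 x] flow_poly_psi[OF wf2' x]
        flow_poly_psi[OF facts1(1) x] flow_poly_psi[OF facts2(1) x] algebra_simps)
    also have "\<dots> = 0" unfolding h1 h2 hg by (simp add: algebra_simps)
    finally show "poly P x = poly 0 x" by simp
  qed
  then have "poly P lam = 0" by simp
  then have "(lam - 1) * poly (flow_poly G) lam =
     poly (flow_poly (add_edge G1 e0 u v)) lam * poly (flow_poly (add_edge G2 e0 u v)) lam
     + (lam - 1) * (poly (flow_poly G1) lam * poly (flow_poly G2) lam)"
    unfolding P_def by (simp add: algebra_simps)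
  then show ?thesis using assms(11) by (simp add: field_simps)
qed



end
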